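(* Let $X$ be a Minkowski space whose closed unit ball $B$ is a polytope, and let $f$ be the largest number of facets (faces of codimension one within the face itself) that a proper face of $B$ can have. Then $m(X)\geq f$.
   Context: A Minkowski space is a finite-dimensional real normed space $(X,\|\cdot\|)$. For a set $S\subseteq X$, its midpoint set is $M(S)=\{\tfrac12(x+y): x,y\in S,\ x\neq y\}$. A set $S\subseteq X$ is an M-set if every vector in $M(S)$ has norm exactly $1$ and every vector in $S$ has norm strictly greater than $1$. $m(X)$ denotes the largest cardinality of an M-set in $X$ if such a largest finite cardinality exists, and $m(X)=\infty$ otherwise. *)

theory Defs
  imports "HOL-Analysis.Analysis" "HOL-Library.Extended_Nat"
begin

text \<open>A Minkowski space is modelled as a finite-dimensional real vector space
  (a type of class euclidean_space, used only for its linear structure) equipped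
  with an arbitrary norm N.\<close>

definition is_norm :: "('a::euclidean_space \<Rightarrow> real) \<Rightarrow> bool" where
  "is_norm N \<longleftrightarrow>
     (\<forall>x. N x = 0 \<longleftrightarrow> x = 0) \<and>
     (\<forall>x y. N (x + y) \<le> N x + N y) \<and>
     (\<forall>c x. N (c *\<^sub>R x) = \<bar>c\<bar> * N x)"

definition unit_ball :: "('a::euclidean_space \<Rightarrow> real) \<Rightarrow> 'a set" where
  "unit_ball N = {x. N x \<le> 1}"

definition midpoint_set :: "'a::real_vector set \<Rightarrow> 'a set" where
  "midpoint_set S = {(1/2) *\<^sub>R (x + y) | x y. x \<in> S \<and> y \<in> S \<and> x \<noteq> y}"

definition is_Mset :: "('a::euclidean_space \<Rightarrow> real) \<Rightarrow> 'a set \<Rightarrow> bool" where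
  "is_Mset N S \<longleftrightarrow> (\<forall>v \<in> midpoint_set S. N v = 1) \<and> (\<forall>x \<in> S. N x > 1)"

definition m_number :: "('a::euclidean_space \<Rightarrow> real) \<Rightarrow> enat" where
  "m_number N =
     (if \<exists>S. is_Mset N S \<and> infinite S then \<infinity>
      else Sup {enat (card S) | S. is_Mset N S})"

definition max_facets_proper_face :: "('a::euclidean_space \<Rightarrow> real) \<Rightarrow> nat" where
  "max_facets_proper_face N =
     Max {card {G. G facet_of F} | F. F face_of unit_ball N \<and> F \<noteq> unit_ball N}"

end

theory Submission
  imports Defs
begin

lemma mid_alg: "(1/2) *\<^sub>R (((1 + e) *\<^sub>R a - e *\<^sub>R c) + ((1 + e) *\<^sub>R b - e *\<^sub>R c)) = (1 + e) *\<^sub>R midpoint a b - e *\<^sub>R (c::'a::real_vector)"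
proof -
  have h: "(e / 2) *\<^sub>R c + (e / 2) *\<^sub>R c = e *\<^sub>R c" by (simp flip: scaleR_add_left)
  show ?thesis
  unfolding midpoint_def scaleR_diff_right scaleR_add_right scaleR_scaleR
  using h by (simp add: algebra_simps)
qed

lemma facet_key:
  fixes F :: "'a::euclidean_space set"
  assumes "polytope F" "G facet_of F" "H face_of F" "H \<noteq> F" "x \<in> rel_interior G" "x \<in> H"
  shows "G = H"
proof -
  have cF: "convex F" using assms(1) polytope_imp_convex by blast
  have GF: "G \<subseteq> F" using assms(2) facet_of_imp_subset by blast
  have "G \<subseteq> H" using subset_of_face_of[OF assms(3) GF] assms(5,6) by blast
  show ?thesis
  proof (rule ccontr)
    assume ne: "G \<noteq> H"
    have "G face_of H" using face_of_subset[OF facet_of_imp_face_of[OF assms(2)] \<open>G \<subseteq> H\<close>]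
        face_of_imp_subset[OF assms(3)] by blast
    then have "aff_dim G < aff_dim H"
      using face_of_aff_dim_lt[OF face_of_imp_convex[OF assms(3)]] ne by blast
    moreover have "aff_dim H < aff_dim F" using face_of_aff_dim_lt[OF cF assms(3,4)] .
    moreover have "aff_dim G = aff_dim F - 1" using assms(2) facet_of_def by blast
    ultimately show False by linarith
  qed
qed

lemma facet_points:
  fixes F :: "'a::euclidean_space set"
  assumes "polytope F"
  shows "\<exists>S. finite S \<and> card S = card {G. G facet_of F} \<and> S \<subseteq> affine hull F - F
             \<and> midpoint_set S \<subseteq> F"
proof (cases "F = {}")
  case True
  then show ?thesis by (intro exI[of _ "{}"]) (auto simp: midpoint_set_def)
next
  case False
  define Fs where "Fs = {G. G facet_of F}"
  have cF: "convex F" using assms polytope_imp_convex by blast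
  have finFs: "finite Fs"
    using finite_polytope_faces[OF assms] unfolding Fs_def
    by (rule finite_subset[rotated]) (auto simp: facet_of_def)
  obtain c where c: "c \<in> rel_interior F" using False rel_interior_eq_empty[OF cF] by blast
  have cF': "c \<in> F" using c rel_interior_subset by blast
  define p where "p G = (SOME x. x \<in> rel_interior G)" for G :: "'a set"
  have pG: "p G \<in> rel_interior G" if "G \<in> Fs" for G
  proof -
    have "G \<noteq> {}" "convex G" using that unfolding Fs_def facet_of_def
      using face_of_imp_convex by blast+
    then have "\<exists>x. x \<in> rel_interior G" using rel_interior_eq_empty by blast
    then show ?thesis unfolding p_def by (rule someI_ex)
  qed
  have pGs: "p G \<in> G" if "G \<in> Fs" for G using pG[OF that] rel_interior_subset by blast
  have GneF: "G \<noteq> F" if "G \<in> Fs" for G using that unfolding Fs_def by auto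
  have GsubF: "G \<subseteq> F" if "G \<in> Fs" for G using that unfolding Fs_def
    using facet_of_imp_subset by blast
  have key: "G = H" if "G \<in> Fs" "H \<in> Fs" "p G \<in> H" for G H
    using facet_key[OF assms _ _ _ pG[OF that(1)] that(3)] that GneF[OF that(2)]
    unfolding Fs_def by (simp add: facet_of_def)
  have pinj: "inj_on p Fs"
    by (rule inj_onI) (metis key pGs)
  have mid: "midpoint (p G) (p H) \<in> rel_interior F" if "G \<in> Fs" "H \<in> Fs" "G \<noteq> H" for G H
  proof (rule ccontr)
    assume nin: "midpoint (p G) (p H) \<notin> rel_interior F"
    have ne: "p G \<noteq> p H" using pinj that by (meson inj_on_def)
    have "midpoint (p G) (p H) \<in> F"
    proof -
      have "(1 - 1/2) *\<^sub>R p G + (1/2) *\<^sub>R p H \<in> F"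
        using convexD_alt[OF cF, of "p G" "p H" "1/2"] GsubF pGs that by auto
      then show ?thesis unfolding midpoint_def by (simp add: algebra_simps)
    qed
    moreover have "closure F = F"
      using assms polytope_imp_closed closure_closed by blast
    ultimately have "midpoint (p G) (p H) \<in> rel_frontier F"
      using nin by (simp add: rel_frontier_def)
    then obtain K where K: "K facet_of F" "midpoint (p G) (p H) \<in> K"
      using rel_frontier_of_polyhedron[OF polytope_imp_polyhedron[OF assms]] by blast
    have Kf: "K face_of F" using K facet_of_imp_face_of by blast
    have "p G \<in> K \<and> p H \<in> K"
      using Kf K(2) ne GsubF pGs that unfolding face_of_def
      by (meson midpoint_in_open_segment subsetD)
    moreover have "K \<noteq> F" using K by auto
    ultimately have "G = K" "H = K"
      using facet_key[OF assms _ Kf] pG that unfolding Fs_def by blast+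
    then show False using that by simp
  qed
  define Q where "Q e G H \<longleftrightarrow> (G \<noteq> H \<longrightarrow> (1 + e) *\<^sub>R midpoint (p G) (p H) - e *\<^sub>R c \<in> F)"
    for e :: real and G H
  have ev: "eventually (\<lambda>e. Q e (fst y) (snd y)) (at_right 0)" if "y \<in> Fs \<times> Fs" for y
  proof (cases "fst y = snd y")
    case True then show ?thesis by (simp add: Q_def)
  next
    case False
    have yF: "fst y \<in> Fs" "snd y \<in> Fs" using that by (auto simp: mem_Times_iff)
    have cA: "c \<in> affine hull F" by (rule hull_inc[OF cF'])
    obtain m where m: "m > 1" "\<And>e. e > 1 \<and> e \<le> m \<Longrightarrow>
        (1 - e) *\<^sub>R c + e *\<^sub>R midpoint (p (fst y)) (p (snd y)) \<in> F"
      using bspec[OF convex_rel_interior_if[OF cF mid[OF yF False]] cA] by blast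
    show ?thesis unfolding eventually_at_right_field
    proof (intro exI[of _ "m - 1"] conjI allI impI)
      show "0 < m - 1" using m by simp
      fix e :: real assume "0 < e" "e < m - 1"
      then have "(1 - (1 + e)) *\<^sub>R c + (1 + e) *\<^sub>R midpoint (p (fst y)) (p (snd y)) \<in> F"
        using m(2)[of "1 + e"] by simp
      then show "Q e (fst y) (snd y)" unfolding Q_def
        by (simp add: algebra_simps)
    qed
  qed
  have "eventually (\<lambda>e. \<forall>y\<in>Fs \<times> Fs. Q e (fst y) (snd y)) (at_right 0)"
    by (rule eventually_ball_finite) (use finFs ev in auto)
  then obtain b :: real where b: "b > 0" "\<And>e. e > 0 \<Longrightarrow> e < b \<Longrightarrow> \<forall>y\<in>Fs \<times> Fs. Q e (fst y) (snd y)"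
    unfolding eventually_at_right_field by auto
  define e where "e = b / 2"
  have e: "e > 0" "\<forall>y\<in>Fs \<times> Fs. Q e (fst y) (snd y)" using b unfolding e_def by auto
  define x where "x G = (1 + e) *\<^sub>R p G - e *\<^sub>R c" for G
  define S where "S = x ` Fs"
  have xinj: "inj_on x Fs"
  proof (rule inj_onI)
    fix G H assume "G \<in> Fs" "H \<in> Fs" "x G = x H"
    then have "(1 + e) *\<^sub>R p G = (1 + e) *\<^sub>R p H" unfolding x_def by simp
    then have "p G = p H" using e(1) by simp
    then show "G = H" using pinj \<open>G \<in> Fs\<close> \<open>H \<in> Fs\<close> by (meson inj_on_def)
  qed
  have aff: "x G \<in> affine hull F" if "G \<in> Fs" for G
  proof -
    have "p G \<in> affine hull F" "c \<in> affine hull F"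
      using hull_inc[of "p G" F affine] hull_inc[OF cF'] pGs[OF that] GsubF[OF that] by auto
    then have "(1 + e) *\<^sub>R p G + (- e) *\<^sub>R c \<in> affine hull F"
      by (intro mem_affine[OF affine_affine_hull]) auto
    then show ?thesis unfolding x_def by (simp add: algebra_simps)
  qed
  have notF: "x G \<notin> F" if "G \<in> Fs" for G
  proof
    assume xF: "x G \<in> F"
    have dis: "p G \<notin> rel_interior F"
      using face_of_disjoint_rel_interior[of G F] that pGs GneF unfolding Fs_def
      by (auto simp: facet_of_def)
    have "c \<noteq> x G"
    proof
      assume "c = x G"
      then have "(1 + e) *\<^sub>R p G = (1 + e) *\<^sub>R c" unfolding x_def by (simp add: algebra_simps)
      then have "p G = c" using e(1) by simp
      then show False using dis c by simp
    qed
    moreover have "p G = (1 - 1/(1+e)) *\<^sub>R c + (1/(1+e)) *\<^sub>R x G"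
    proof -
      have "(1/(1+e)) *\<^sub>R p G + (e/(1+e)) *\<^sub>R p G = ((1 + e)/(1+e)) *\<^sub>R p G"
        by (simp only: scaleR_add_left[symmetric] add_divide_distrib)
      also have "\<dots> = p G" using e(1) by simp
      finally have h: "(1/(1+e)) *\<^sub>R p G + (e/(1+e)) *\<^sub>R p G = p G" .
      show ?thesis using e(1) h unfolding x_def by (simp add: algebra_simps divide_simps)
    qed
    ultimately have "p G \<in> open_segment c (x G)"
      using e(1) unfolding in_segment by (intro conjI exI[of _ "1/(1+e)"]) auto
    then have "p G \<in> rel_interior F"
      using rel_interior_closure_convex_segment[OF cF c] xF closure_subset by blast
    then show False using dis by simp
  qed
  have ms: "midpoint_set S \<subseteq> F"
  proof
    fix v assume "v \<in> midpoint_set S"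
    then obtain G H where GH: "G \<in> Fs" "H \<in> Fs" "x G \<noteq> x H" "v = (1/2) *\<^sub>R (x G + x H)"
      unfolding midpoint_set_def S_def by blast
    then have "G \<noteq> H" by auto
    then have "(1 + e) *\<^sub>R midpoint (p G) (p H) - e *\<^sub>R c \<in> F"
      using e(2) GH unfolding Q_def by force
    moreover have "v = (1 + e) *\<^sub>R midpoint (p G) (p H) - e *\<^sub>R c"
      unfolding GH(4) x_def by (rule mid_alg)
    ultimately show "v \<in> F" by simp
  qed
  show ?thesis
  proof (intro exI[of _ S] conjI)
    show "finite S" unfolding S_def using finFs by simp
    show "card S = card {G. G facet_of F}" unfolding S_def Fs_def[symmetric]
      using card_image[OF xinj] .
    show "S \<subseteq> affine hull F - F" unfolding S_def using aff notF by auto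
  qed (rule ms)
qed

lemma norm_facts:
  fixes N :: "'a::euclidean_space \<Rightarrow> real"
  assumes "is_norm N"
  shows "N 0 = 0" "\<And>x. N (- x) = N x" "\<And>x. N x \<ge> 0" "\<And>c x. N (c *\<^sub>R x) = \<bar>c\<bar> * N x"
    "\<And>x. N x = 0 \<longleftrightarrow> x = 0"
proof -
  show hom: "\<And>c x. N (c *\<^sub>R x) = \<bar>c\<bar> * N x" "\<And>x. N x = 0 \<longleftrightarrow> x = 0"
    using assms unfolding is_norm_def by blast+
  show "N 0 = 0" using hom(2) by simp
  show neg: "\<And>x. N (- x) = N x" using hom(1)[of "-1"] by simp
  show "\<And>x. N x \<ge> 0"
  proof -
    fix x
    have "N (x + - x) \<le> N x + N (- x)" using assms unfolding is_norm_def by blast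
    then show "N x \<ge> 0" using neg[of x] hom(2)[of 0] by simp
  qed
qed

theorem mainTheorem17:
  fixes N :: "'a::euclidean_space \<Rightarrow> real"
  assumes "is_norm N"
    and "polytope (unit_ball N)"
  shows "enat (max_facets_proper_face N) \<le> m_number N"
proof -
  define B where "B = unit_ball N"
  note nf = norm_facts[OF assms(1)]
  have Bmem: "x \<in> B \<longleftrightarrow> N x \<le> 1" for x unfolding B_def unit_ball_def by simp
  define A where "A = {card {G. G facet_of F} | F. F face_of B \<and> F \<noteq> B}"
  have "A = (\<lambda>F. card {G. G facet_of F}) ` {F. F face_of B \<and> F \<noteq> B}" unfolding A_def by blast
  moreover have "finite {F. F face_of B \<and> F \<noteq> B}"
    using finite_polytope_faces[OF assms(2)[folded B_def]] by (rule finite_subset[rotated]) auto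
  ultimately have finA: "finite A" by simp
  have "0 \<in> B" using Bmem nf(1) by simp
  then have "B \<noteq> {}" by blast
  then have "card {G. G facet_of {}} \<in> A" unfolding A_def
    by (intro CollectI exI[of _ "{}"]) auto
  then have "Max A \<in> A" using finA Max_in by blast
  then obtain F where F: "F face_of B" "F \<noteq> B" "max_facets_proper_face N = card {G. G facet_of F}"
    unfolding A_def max_facets_proper_face_def B_def[symmetric] by auto
  have polF: "polytope F" using face_of_polytope_polytope[OF assms(2)[folded B_def] F(1)] .
  obtain S where S: "finite S" "card S = card {G. G facet_of F}" "S \<subseteq> affine hull F - F"
      "midpoint_set S \<subseteq> F"
    using facet_points[OF polF] by blast
  have MS: "is_Mset N S"
  proof (cases "F = {}")
    case True
    then have "S = {}" using S(3) by simp
    then show ?thesis unfolding is_Mset_def midpoint_set_def by simp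
  next
    case False
    have "F exposed_face_of B"
      using exposed_face_of_polyhedron[OF polytope_imp_polyhedron[OF assms(2)[folded B_def]]] F(1)
      by blast
    then obtain a b where ab: "B \<subseteq> {x. a \<bullet> x \<le> b}" "F = B \<inter> {x. a \<bullet> x = b}"
      unfolding exposed_face_of_def by blast
    have "0 \<le> b" using ab(1) \<open>0 \<in> B\<close> by auto
    moreover have "b \<noteq> 0"
    proof
      assume b0: "b = 0"
      have "B \<subseteq> F"
      proof
        fix x assume "x \<in> B"
        then have "-x \<in> B" using Bmem nf(2) by simp
        then have "a \<bullet> x \<le> 0" "a \<bullet> (-x) \<le> 0" using ab(1) \<open>x \<in> B\<close> b0 by auto
        then show "x \<in> F" using ab(2) b0 \<open>x \<in> B\<close> by simp
      qed
      then show False using F(2) face_of_imp_subset[OF F(1)] by blast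
    qed
    ultimately have bpos: "b > 0" by simp
    have "affine hull F \<subseteq> {x. a \<bullet> x = b}"
      by (rule hull_minimal) (use ab(2) affine_hyperplane in auto)
    then have Sh: "\<And>x. x \<in> S \<Longrightarrow> a \<bullet> x = b \<and> x \<notin> F" using S(3) by auto
    have out: "N x > 1" if "x \<in> S" for x
    proof (rule ccontr)
      assume "\<not> N x > 1"
      then have "x \<in> B" using Bmem by simp
      then show False using Sh[OF that] ab(2) by blast
    qed
    have on: "N v = 1" if "v \<in> F" for v
    proof -
      have vB: "N v \<le> 1" "a \<bullet> v = b" using that ab(2) Bmem by auto
      have "v \<noteq> 0" using vB(2) bpos by auto
      then have Nv: "N v > 0" using nf(3)[of v] nf(5)[of v] by linarith
      show ?thesis
      proof (rule ccontr)
        assume "N v \<noteq> 1"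
        then have lt: "N v < 1" using vB by simp
        define w where "w = (1 / N v) *\<^sub>R v"
        have "N w = 1" unfolding w_def nf(4) using Nv by simp
        then have "w \<in> B" using Bmem by simp
        then have "a \<bullet> w \<le> b" using ab(1) by auto
        moreover have "a \<bullet> w = b / N v" unfolding w_def using vB(2) by simp
        moreover have "b / N v > b" using bpos Nv lt by (simp add: field_simps)
        ultimately show False by simp
      qed
    qed
    show ?thesis unfolding is_Mset_def using out on S(4) by blast
  qed
  show ?thesis
  proof (cases "\<exists>S. is_Mset N S \<and> infinite S")
    case True
    then show ?thesis unfolding m_number_def by simp
  next
    case False
    have "enat (card S) \<in> {enat (card S) | S. is_Mset N S}" using MS by blast
    then have "enat (card S) \<le> Sup {enat (card S) | S. is_Mset N S}" by (rule Sup_upper)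
    then show ?thesis unfolding m_number_def using False F(3) S(2) by simp
  qed
qed

end
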